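(* For every integer $n\ge 2$, the graphs $Bar_n$, $B_{n-1}^c$ and $K_n\cup K_n$ (disjoint union of two copies of $K_n$) all have the same domination polynomial, namely $\big((1+x)^n-1\big)^2$. Consequently $\{Bar_n, B_{n-1}^c, K_n\cup K_n\}\subseteq [Bar_n]=[B_{n-1}^c]$; in particular $Bar_n$ is not $\mathcal{D}$-unique.
   Context: All graphs are finite and simple. For a graph $G$, a set $S\subseteq V(G)$ is dominating if every vertex of $V(G)\setminus S$ is adjacent to some vertex of $S$. Let $d(G,i)$ be the number of dominating sets of $G$ of cardinality $i$; the domination polynomial is $D(G,x)=\sum_{i=1}^{|V(G)|} d(G,i)x^i$. Two graphs are $\mathcal{D}$-equivalent if they have the same domination polynomial; $[G]$ denotes the set of (isomorphism classes of) graphs $\mathcal{D}$-equivalent to $G$, and $G$ is $\mathcal{D}$-unique if $[G]=\{G\}$. The $n$-barbell graph $Bar_n$ is obtained from two vertex-disjoint copies of $K_n$ by adding a single edge joining a vertex of one copy to a vertex of the other. The $m$-book graph $B_m$ has vertex set $\{u,v,a_1,\dots,a_m,b_1,\dots,b_m\}$ and edges $uv$ and $ua_i, a_ib_i, b_iv$ ($1\le i\le m$); $B_m^c$ denotes its complement. *)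

theory Defs
  imports Main "HOL-Computational_Algebra.Polynomial"
begin

type_synonym 'a graph = "'a set \<times> 'a set set"

definition verts :: "'a graph \<Rightarrow> 'a set" where "verts G = fst G"
definition edges :: "'a graph \<Rightarrow> 'a set set" where "edges G = snd G"

definition simple_graph :: "'a graph \<Rightarrow> bool" where
  "simple_graph G \<longleftrightarrow> finite (verts G) \<and>
     (\<forall>e\<in>edges G. e \<subseteq> verts G \<and> card e = 2)"

definition adj :: "'a graph \<Rightarrow> 'a \<Rightarrow> 'a \<Rightarrow> bool" where
  "adj G u v \<longleftrightarrow> {u, v} \<in> edges G"

definition dominating :: "'a graph \<Rightarrow> 'a set \<Rightarrow> bool" where
  "dominating G S \<longleftrightarrow> S \<subseteq> verts G \<and> (\<forall>v \<in> verts G - S. \<exists>u\<in>S. adj G u v)"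

definition dom_count :: "'a graph \<Rightarrow> nat \<Rightarrow> nat" where
  "dom_count G i = card {S. dominating G S \<and> card S = i}"

definition dom_poly :: "'a graph \<Rightarrow> int poly" where
  "dom_poly G = (\<Sum>i = 1..card (verts G). monom (int (dom_count G i)) i)"

definition graph_iso :: "'a graph \<Rightarrow> 'b graph \<Rightarrow> bool" where
  "graph_iso G H \<longleftrightarrow> (\<exists>f. bij_betw f (verts G) (verts H) \<and>
     (\<forall>u\<in>verts G. \<forall>v\<in>verts G. adj G u v \<longleftrightarrow> adj H (f u) (f v)))"

definition D_equiv :: "'a graph \<Rightarrow> 'b graph \<Rightarrow> bool" where
  "D_equiv G H \<longleftrightarrow> dom_poly G = dom_poly H"

text \<open>The D-equivalence class [G] (graphs on the same vertex type).\<close>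
definition D_class :: "'a graph \<Rightarrow> 'a graph set" where
  "D_class G = {H. simple_graph H \<and> D_equiv H G}"

definition D_unique :: "'a graph \<Rightarrow> bool" where
  "D_unique G \<longleftrightarrow> (\<forall>H \<in> D_class G. graph_iso H G)"

definition complement :: "'a graph \<Rightarrow> 'a graph" where
  "complement G = (verts G, {{u, v} | u v. u \<in> verts G \<and> v \<in> verts G \<and> u \<noteq> v \<and> {u, v} \<notin> edges G})"

definition two_Kn :: "nat \<Rightarrow> nat graph" where
  "two_Kn n = ({0..<2*n},
     {{u, v} | u v. u \<noteq> v \<and> ((u < n \<and> v < n) \<or> (n \<le> u \<and> u < 2*n \<and> n \<le> v \<and> v < 2*n))})"

definition barbell :: "nat \<Rightarrow> nat graph" where
  "barbell n = ({0..<2*n}, edges (two_Kn n) \<union> {{0, n}})"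

text \<open>Book graph B_m: u = 0, v = 1, a_i = i + 1, b_i = m + i + 1 (1 \<le> i \<le> m).\<close>
definition book :: "nat \<Rightarrow> nat graph" where
  "book m = ({0..<2*m+2},
     {{0, 1}} \<union> (\<Union>i\<in>{1..m}. {{0, i+1}, {i+1, m+i+1}, {m+i+1, 1}}))"

end

theory Submission
  imports Defs
begin


lemma pow_sum:
  fixes A :: "'a set"
  assumes "finite A"
  shows "(\<Sum>S\<in>Pow A. (monom (1::int) (card S))) = [:1,1:] ^ card A"
  using assms
proof (induction A rule: finite_induct)
  case empty
  then show ?case by simp
next
  case (insert a A)
  have d: "Pow A \<inter> insert a ` Pow A = {}" using insert by auto
  have inj: "inj_on (insert a) (Pow A)" using insert unfolding inj_on_def by (metis Pow_iff insert_ident subset_iff)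
  have "(\<Sum>S\<in>Pow (insert a A). monom (1::int) (card S))
      = (\<Sum>S\<in>Pow A. monom 1 (card S)) + (\<Sum>S\<in>insert a ` Pow A. monom 1 (card S))"
    unfolding Pow_insert using d insert by (simp add: sum.union_disjoint)
  also have "(\<Sum>S\<in>insert a ` Pow A. monom (1::int) (card S)) = (\<Sum>S\<in>Pow A. monom 1 (Suc (card S)))"
    using inj insert by (subst sum.reindex) (auto intro!: sum.cong simp: finite_subset card_insert_if)
  also have "\<dots> = monom 1 1 * (\<Sum>S\<in>Pow A. monom 1 (card S))"
    by (simp add: sum_distrib_left mult_monom)
  finally show ?case using insert
    by (simp add: algebra_simps monom_altdef)
qed

lemma pow_sum_ne:
  fixes A :: "'a set"
  assumes "finite A"
  shows "(\<Sum>S\<in>Pow A - {{}}. (monom (1::int) (card S))) = [:1,1:] ^ card A - 1"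
  using pow_sum[OF assms] assms by (simp add: sum_diff1)

lemma dom_poly_alt:
  assumes fin: "finite (verts G)"
  shows "dom_poly G = (\<Sum>S\<in>{S. dominating G S \<and> S \<noteq> {}}. monom 1 (card S))"
proof -
  define D where "D = {S. dominating G S \<and> S \<noteq> {}}"
  have DP: "D \<subseteq> Pow (verts G)" unfolding D_def dominating_def by auto
  have fD: "finite D" using DP fin finite_subset by blast
  have img: "card ` D \<subseteq> {1..card (verts G)}"
  proof
    fix k assume "k \<in> card ` D"
    then obtain S where S: "S \<in> D" "k = card S" by auto
    have "S \<subseteq> verts G" "S \<noteq> {}" using S DP unfolding D_def by auto
    then show "k \<in> {1..card (verts G)}" using S fin
      by (auto simp: card_mono Suc_le_eq card_gt_0_iff finite_subset)
  qed
  have "dom_poly G = (\<Sum>i = 1..card (verts G). (\<Sum>S\<in>{S \<in> D. card S = i}. monom 1 (card S)))"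
    unfolding dom_poly_def
  proof (rule sum.cong[OF refl])
    fix i assume i: "i \<in> {1..card (verts G)}"
    have eq: "{S. dominating G S \<and> card S = i} = {S \<in> D. card S = i}"
      using i unfolding D_def by auto
    have "(\<Sum>S\<in>{S \<in> D. card S = i}. monom (1::int) (card S)) = (\<Sum>S\<in>{S \<in> D. card S = i}. monom 1 i)"
      by (rule sum.cong) auto
    also have "\<dots> = of_nat (card {S \<in> D. card S = i}) * monom 1 i" by simp
    also have "\<dots> = monom (int (card {S \<in> D. card S = i})) i"
      by (simp add: of_nat_monom mult_monom)
    finally show "monom (int (dom_count G i)) i = (\<Sum>S\<in>{S \<in> D. card S = i}. monom 1 (card S))"
      unfolding dom_count_def eq by simp
  qed
  also have "\<dots> = (\<Sum>S\<in>D. monom 1 (card S))"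
    by (rule sum.group[OF fD _ img]) simp
  finally show ?thesis unfolding D_def .
qed

lemma dom_poly_two_parts:
  assumes fP: "finite P" and fQ: "finite Q" and disj: "P \<inter> Q = {}"
    and V: "verts G = P \<union> Q"
    and dom: "\<And>S. dominating G S \<longleftrightarrow> S \<subseteq> P \<union> Q \<and> S \<inter> P \<noteq> {} \<and> S \<inter> Q \<noteq> {}"
  shows "dom_poly G = ([:1,1:] ^ card P - 1) * ([:1,1:] ^ card Q - 1)"
proof -
  let ?A = "(Pow P - {{}}) \<times> (Pow Q - {{}})"
  have Deq: "{S. dominating G S \<and> S \<noteq> {}} = (\<lambda>(S,T). S \<union> T) ` ?A"
  proof (intro set_eqI iffI)
    fix S assume "S \<in> {S. dominating G S \<and> S \<noteq> {}}"
    then have "dominating G S" by simp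
    then have S: "S \<subseteq> P \<union> Q" "S \<inter> P \<noteq> {}" "S \<inter> Q \<noteq> {}" using dom by blast+
    then have "(S \<inter> P, S \<inter> Q) \<in> ?A" by blast
    moreover have "S = (\<lambda>(S,T). S \<union> T) (S \<inter> P, S \<inter> Q)" using S(1) by auto
    ultimately show "S \<in> (\<lambda>(S,T). S \<union> T) ` ?A" by (rule rev_image_eqI)
  next
    fix S assume "S \<in> (\<lambda>(S,T). S \<union> T) ` ?A"
    then obtain S1 T1 where h: "S = S1 \<union> T1" "S1 \<subseteq> P" "T1 \<subseteq> Q" "S1 \<noteq> {}" "T1 \<noteq> {}" by auto
    have "S \<subseteq> P \<union> Q" "S \<inter> P \<noteq> {}" "S \<inter> Q \<noteq> {}" using h by blast+
    then have "dominating G S" using dom by blast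
    moreover have "S \<noteq> {}" using h by blast
    ultimately show "S \<in> {S. dominating G S \<and> S \<noteq> {}}" by simp
  qed
  have inj: "inj_on (\<lambda>(S,T). S \<union> T) ?A"
  proof (rule inj_onI)
    fix x y assume x: "x \<in> ?A" and y: "y \<in> ?A" and e: "(\<lambda>(S,T). S \<union> T) x = (\<lambda>(S,T). S \<union> T) y"
    obtain S T where xST: "x = (S, T)" by (cases x)
    obtain S' T' where yST: "y = (S', T')" by (cases y)
    have h: "S \<union> T = S' \<union> T'" "S \<subseteq> P" "T \<subseteq> Q" "S' \<subseteq> P" "T' \<subseteq> Q"
      using x y e unfolding xST yST by auto
    have 1: "S = (S \<union> T) \<inter> P" "T = (S \<union> T) \<inter> Q" using h(2,3) disj by blast+
    have 2: "S' = (S' \<union> T') \<inter> P" "T' = (S' \<union> T') \<inter> Q" using h(4,5) disj by blast+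
    show "x = y" using 1 2 h(1) unfolding xST yST by simp
  qed
  have fin: "finite (verts G)" using V fP fQ by simp
  have "dom_poly G = (\<Sum>x\<in>?A. monom 1 (card ((\<lambda>(S,T). S \<union> T) x)))"
    unfolding dom_poly_alt[OF fin] Deq using inj by (simp add: sum.reindex)
  also have "\<dots> = (\<Sum>x\<in>?A. monom 1 (card (fst x)) * monom 1 (card (snd x)))"
  proof (rule sum.cong[OF refl])
    fix x assume x: "x \<in> ?A"
    obtain S T where xST: "x = (S, T)" by (cases x)
    have h: "S \<subseteq> P" "T \<subseteq> Q" using x unfolding xST by auto
    have "S \<inter> T = {}" using h disj by auto
    then have "card (S \<union> T) = card S + card T"
      using h fP fQ by (simp add: card_Un_disjoint finite_subset)
    then show "monom (1::int) (card ((\<lambda>(S,T). S \<union> T) x)) = monom 1 (card (fst x)) * monom 1 (card (snd x))"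
      unfolding xST by (simp add: mult_monom)
  qed
  also have "\<dots> = (\<Sum>S\<in>Pow P - {{}}. monom 1 (card S)) * (\<Sum>T\<in>Pow Q - {{}}. monom 1 (card T))"
    by (simp add: sum_product sum.cartesian_product case_prod_beta)
  also have "\<dots> = ([:1,1:] ^ card P - 1) * ([:1,1:] ^ card Q - 1)"
    using pow_sum_ne[OF fP] pow_sum_ne[OF fQ] by simp
  finally show ?thesis .
qed

lemma adj_two: "adj (two_Kn n) u v \<longleftrightarrow> u \<noteq> v \<and> ((u < n \<and> v < n) \<or> (n \<le> u \<and> u < 2*n \<and> n \<le> v \<and> v < 2*n))"
  unfolding adj_def two_Kn_def edges_def by (auto simp: doubleton_eq_iff)

lemma adj_bar: "adj (barbell n) u v \<longleftrightarrow> adj (two_Kn n) u v \<or> {u,v} = {0,n}"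
  unfolding adj_def barbell_def edges_def by (simp add: disj_commute)

lemma adj_comp: "adj (complement G) u v \<longleftrightarrow> u \<in> verts G \<and> v \<in> verts G \<and> u \<noteq> v \<and> {u,v} \<notin> edges G"
  unfolding adj_def complement_def edges_def verts_def by (auto simp: doubleton_eq_iff insert_commute)

lemma verts_two: "verts (two_Kn n) = {0..<2*n}" by (simp add: verts_def two_Kn_def)
lemma verts_bar: "verts (barbell n) = {0..<2*n}" by (simp add: verts_def barbell_def)
lemma verts_book: "verts (book m) = {0..<2*m+2}" by (simp add: verts_def book_def)
lemma verts_comp: "verts (complement G) = verts G" by (simp add: verts_def complement_def)

lemma dom_two:
  assumes npos: "n > 0"
  shows "dominating (two_Kn n) S \<longleftrightarrow> S \<subseteq> {0..<n} \<union> {n..<2*n} \<and> S \<inter> {0..<n} \<noteq> {} \<and> S \<inter> {n..<2*n} \<noteq> {}"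
proof -
  have V: "{0..<2*n} = {0..<n} \<union> {n..<2*n}" by auto
  show ?thesis
  proof
    assume d: "dominating (two_Kn n) S"
    then have sub: "S \<subseteq> {0..<2*n}" unfolding dominating_def verts_two by auto
    have A: "S \<inter> {0..<n} \<noteq> {}"
    proof
      assume e: "S \<inter> {0..<n} = {}"
      then have "0 \<in> verts (two_Kn n) - S" using e npos unfolding verts_two by auto
      then obtain u where "u \<in> S" "adj (two_Kn n) u 0" using d unfolding dominating_def by blast
      then show False using e by (auto simp: adj_two)
    qed
    have B: "S \<inter> {n..<2*n} \<noteq> {}"
    proof
      assume e: "S \<inter> {n..<2*n} = {}"
      then have "n \<in> verts (two_Kn n) - S" using e npos unfolding verts_two by auto
      then obtain u where "u \<in> S" "adj (two_Kn n) u n" using d unfolding dominating_def by blast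
      then show False using e by (auto simp: adj_two)
    qed
    show "S \<subseteq> {0..<n} \<union> {n..<2*n} \<and> S \<inter> {0..<n} \<noteq> {} \<and> S \<inter> {n..<2*n} \<noteq> {}"
      using sub A B V by auto
  next
    assume h: "S \<subseteq> {0..<n} \<union> {n..<2*n} \<and> S \<inter> {0..<n} \<noteq> {} \<and> S \<inter> {n..<2*n} \<noteq> {}"
    show "dominating (two_Kn n) S"
      unfolding dominating_def verts_two
    proof (intro conjI ballI)
      show "S \<subseteq> {0..<2*n}" using h V by auto
    next
      fix v assume v: "v \<in> {0..<2*n} - S"
      show "\<exists>u\<in>S. adj (two_Kn n) u v"
      proof (cases "v < n")
        case True
        obtain u where "u \<in> S" "u < n" using h by auto
        then show ?thesis using True v by (auto simp: adj_two)
      next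
        case False
        obtain u where "u \<in> S" "n \<le> u" "u < 2*n" using h by auto
        then show ?thesis using False v by (auto simp: adj_two)
      qed
    qed
  qed
qed

lemma dom_bar:
  assumes "n \<ge> 2"
  shows "dominating (barbell n) S \<longleftrightarrow> dominating (two_Kn n) S"
proof
  assume d: "dominating (barbell n) S"
  then have sub: "S \<subseteq> {0..<2*n}" unfolding dominating_def verts_bar by auto
  have A: "S \<inter> {0..<n} \<noteq> {}"
  proof
    assume e: "S \<inter> {0..<n} = {}"
    then have "1 \<in> verts (barbell n) - S" using assms unfolding verts_bar by auto
    then obtain u where "u \<in> S" "adj (barbell n) u 1" using d unfolding dominating_def by blast
    then show False using e assms by (auto simp: adj_bar adj_two doubleton_eq_iff)
  qed
  have B: "S \<inter> {n..<2*n} \<noteq> {}"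
  proof
    assume e: "S \<inter> {n..<2*n} = {}"
    then have "n+1 \<in> verts (barbell n) - S" using assms unfolding verts_bar by auto
    then obtain u where "u \<in> S" "adj (barbell n) u (n+1)" using d unfolding dominating_def by blast
    then show False using e assms by (auto simp: adj_bar adj_two doubleton_eq_iff)
  qed
  show "dominating (two_Kn n) S" using dom_two[of n S] sub A B assms by auto
next
  assume d: "dominating (two_Kn n) S"
  then show "dominating (barbell n) S"
    unfolding dominating_def verts_bar verts_two adj_bar by blast
qed

lemma book_cross:
  assumes "{u, v} \<in> edges (book m)"
  shows "((u = 0 \<or> m+2 \<le> u) \<and> 1 \<le> v \<and> v \<le> m+1) \<or> ((v = 0 \<or> m+2 \<le> v) \<and> 1 \<le> u \<and> u \<le> m+1)"
  using assms unfolding book_def edges_def by (auto simp: doubleton_eq_iff)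

lemma book_edge01: "{0, 1} \<in> edges (book m)"
  unfolding book_def edges_def by simp

lemma book_edges:
  assumes "1 \<le> i" "i \<le> m"
  shows "{0, i+1} \<in> edges (book m)" "{m+i+1, 1} \<in> edges (book m)"
proof -
  have i: "i \<in> {1..m}" using assms by simp
  have "{0, i+1} \<in> (\<Union>i\<in>{1..m}. {{0, i+1}, {i+1, m+i+1}, {m+i+1, 1}})"
    by (rule UN_I[OF i]) simp
  then show "{0, i+1} \<in> edges (book m)" unfolding book_def edges_def by simp
  have "{m+i+1, 1} \<in> (\<Union>i\<in>{1..m}. {{0, i+1}, {i+1, m+i+1}, {m+i+1, 1}})"
    by (rule UN_I[OF i]) simp
  then show "{m+i+1, 1} \<in> edges (book m)" unfolding book_def edges_def by simp
qed

lemma dom_book: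
  fixes m :: nat
  defines "P \<equiv> {0} \<union> {m+2..<2*m+2}" and "Q \<equiv> {1..m+1}"
  shows "dominating (complement (book m)) S \<longleftrightarrow> S \<subseteq> P \<union> Q \<and> S \<inter> P \<noteq> {} \<and> S \<inter> Q \<noteq> {}"
proof -
  have VB: "verts (book m) = P \<union> Q" unfolding verts_book P_def Q_def by auto
  have V: "verts (complement (book m)) = P \<union> Q" using VB by (simp add: verts_comp)
  show ?thesis
  proof
    assume d: "dominating (complement (book m)) S"
    then have sub: "S \<subseteq> P \<union> Q" using V unfolding dominating_def by auto
    have A: "S \<inter> P \<noteq> {}"
    proof
      assume e: "S \<inter> P = {}"
      have "0 \<in> P" unfolding P_def by simp
      then have "0 \<in> verts (complement (book m)) - S" using V e by blast
      then obtain u where u: "u \<in> S" "adj (complement (book m)) u 0" using d unfolding dominating_def by blast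
      then have uQ: "u \<in> Q" using e sub by blast
      have ne: "{u, 0} \<notin> edges (book m)" using u(2) by (simp add: adj_comp)
      show False
      proof (cases "u = 1")
        case True
        have "{u, 0} = {0, 1}" using True by auto
        then show ?thesis using ne book_edge01[of m] by simp
      next
        case False
        then have u2: "2 \<le> u" "u \<le> m+1" using uQ unfolding Q_def by auto
        have "{0, (u-1)+1} \<in> edges (book m)" using u2 by (intro book_edges(1)) auto
        moreover have "{0, (u-1)+1} = {u, 0}" using u2 by auto
        ultimately show ?thesis using ne by simp
      qed
    qed
    have B: "S \<inter> Q \<noteq> {}"
    proof
      assume e: "S \<inter> Q = {}"
      have "1 \<in> Q" unfolding Q_def by simp
      then have "1 \<in> verts (complement (book m)) - S" using V e by blast
      then obtain u where u: "u \<in> S" "adj (complement (book m)) u 1" using d unfolding dominating_def by blast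
      then have uP: "u \<in> P" using e sub by blast
      have ne: "{u, 1} \<notin> edges (book m)" using u(2) by (simp add: adj_comp)
      show False
      proof (cases "u = 0")
        case True
        then show ?thesis using ne book_edge01[of m] by simp
      next
        case False
        then have u2: "m+2 \<le> u" "u < 2*m+2" using uP unfolding P_def by auto
        have "{m + (u-m-1) + 1, 1} \<in> edges (book m)" using u2 by (intro book_edges(2)) auto
        moreover have "m + (u-m-1) + 1 = u" using u2 by auto
        ultimately show ?thesis using ne by simp
      qed
    qed
    show "S \<subseteq> P \<union> Q \<and> S \<inter> P \<noteq> {} \<and> S \<inter> Q \<noteq> {}" using sub A B by blast
  next
    assume h: "S \<subseteq> P \<union> Q \<and> S \<inter> P \<noteq> {} \<and> S \<inter> Q \<noteq> {}"
    show "dominating (complement (book m)) S"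
      unfolding dominating_def V
    proof (intro conjI ballI)
      show "S \<subseteq> P \<union> Q" using h by blast
    next
      fix v assume v: "v \<in> P \<union> Q - S"
      show "\<exists>u\<in>S. adj (complement (book m)) u v"
      proof (cases "v \<in> P")
        case True
        obtain u where u: "u \<in> S" "u \<in> P" using h by blast
        have "{u, v} \<notin> edges (book m)"
          using book_cross[of u v m] u(2) True unfolding P_def by auto
        moreover have "u \<noteq> v" using u v by blast
        moreover have "u \<in> verts (book m)" "v \<in> verts (book m)" using u True VB by blast+
        ultimately have "adj (complement (book m)) u v" by (simp add: adj_comp)
        then show ?thesis using u by blast
      next
        case False
        then have vQ: "v \<in> Q" using v by blast
        obtain u where u: "u \<in> S" "u \<in> Q" using h by blast
        have "{u, v} \<notin> edges (book m)"
          using book_cross[of u v m] u(2) vQ unfolding Q_def by auto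
        moreover have "u \<noteq> v" using u v by blast
        moreover have "u \<in> verts (book m)" "v \<in> verts (book m)" using u vQ VB by blast+
        ultimately have "adj (complement (book m)) u v" by (simp add: adj_comp)
        then show ?thesis using u by blast
      qed
    qed
  qed
qed

lemma simple_two: "simple_graph (two_Kn n)"
  unfolding simple_graph_def verts_two
proof (rule conjI)
  show "\<forall>e\<in>edges (two_Kn n). e \<subseteq> {0..<2*n} \<and> card e = 2"
  proof
    fix e assume "e \<in> edges (two_Kn n)"
    then obtain u v where e: "e = {u,v}" "u \<noteq> v" "(u < n \<and> v < n) \<or> (n \<le> u \<and> u < 2*n \<and> n \<le> v \<and> v < 2*n)"
      unfolding edges_def two_Kn_def by auto
    show "e \<subseteq> {0..<2*n} \<and> card e = 2" using e by auto
  qed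
qed simp

lemma simple_bar: assumes n: "n \<ge> 2" shows "simple_graph (barbell n)"
  unfolding simple_graph_def verts_bar
proof (rule conjI)
  show "\<forall>e\<in>edges (barbell n). e \<subseteq> {0..<2*n} \<and> card e = 2"
  proof
    fix e assume "e \<in> edges (barbell n)"
    then have "e \<in> edges (two_Kn n) \<or> e = {0, n}" by (auto simp: barbell_def edges_def)
    then show "e \<subseteq> {0..<2*n} \<and> card e = 2"
    proof
      assume "e \<in> edges (two_Kn n)"
      then obtain u v where e: "e = {u,v}" "u \<noteq> v" "(u < n \<and> v < n) \<or> (n \<le> u \<and> u < 2*n \<and> n \<le> v \<and> v < 2*n)"
        unfolding edges_def two_Kn_def by auto
      show ?thesis using e by auto
    next
      assume "e = {0, n}"
      then show ?thesis using n by auto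
    qed
  qed
qed simp

lemma simple_comp: assumes "finite (verts G)" shows "simple_graph (complement G)"
  unfolding simple_graph_def verts_comp
proof (rule conjI)
  show "\<forall>e\<in>edges (complement G). e \<subseteq> verts G \<and> card e = 2"
  proof
    fix e assume "e \<in> edges (complement G)"
    then obtain u v where e: "e = {u,v}" "u \<noteq> v" "u \<in> verts G" "v \<in> verts G"
      unfolding edges_def complement_def by auto
    show "e \<subseteq> verts G \<and> card e = 2" using e by auto
  qed
qed (rule assms)

lemma not_iso:
  assumes "n \<ge> 2"
  shows "\<not> graph_iso (two_Kn n) (barbell n)"
proof
  assume "graph_iso (two_Kn n) (barbell n)"
  then obtain f where bij: "bij_betw f {0..<2*n} {0..<2*n}"
    and pres: "\<forall>u\<in>{0..<2*n}. \<forall>v\<in>{0..<2*n}. adj (two_Kn n) u v \<longleftrightarrow> adj (barbell n) (f u) (f v)"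
    unfolding graph_iso_def verts_two verts_bar by blast
  have im: "f ` {0..<2*n} = {0..<2*n}" using bij by (simp add: bij_betw_def)
  have "1 \<in> f ` {0..<2*n}" "0 \<in> f ` {0..<2*n}" "n \<in> f ` {0..<2*n}" using assms unfolding im by auto
  then obtain a b c where abc: "a \<in> {0..<2*n}" "b \<in> {0..<2*n}" "c \<in> {0..<2*n}"
    "1 = f a" "0 = f b" "n = f c" by (elim imageE)
  have b1: "adj (barbell n) 1 0" using assms by (simp add: adj_bar adj_two)
  have b2: "adj (barbell n) 0 n" by (simp add: adj_bar)
  have b3: "\<not> adj (barbell n) 1 n" using assms by (simp add: adj_bar adj_two doubleton_eq_iff)
  have t1: "adj (two_Kn n) a b" using pres abc b1 by simp
  have t2: "adj (two_Kn n) b c" using pres abc b2 by simp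
  have t3: "\<not> adj (two_Kn n) a c" using pres abc b3 by simp
  have ac: "a \<noteq> c" using abc assms by auto
  show False using t1 t2 t3 ac unfolding adj_two by arith
qed

theorem mainTheorem4:
  fixes n :: nat
  assumes "n \<ge> 2"
  shows "dom_poly (barbell n) = ([:1, 1:] ^ n - 1) ^ 2
    \<and> dom_poly (complement (book (n - 1))) = ([:1, 1:] ^ n - 1) ^ 2
    \<and> dom_poly (two_Kn n) = ([:1, 1:] ^ n - 1) ^ 2
    \<and> {barbell n, complement (book (n - 1)), two_Kn n} \<subseteq> D_class (barbell n)
    \<and> D_class (barbell n) = D_class (complement (book (n - 1)))
    \<and> \<not> D_unique (barbell n)"
proof -
  have domT: "\<And>S. dominating (two_Kn n) S \<longleftrightarrow> S \<subseteq> {0..<n} \<union> {n..<2*n} \<and> S \<inter> {0..<n} \<noteq> {} \<and> S \<inter> {n..<2*n} \<noteq> {}"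
    using dom_two assms by simp
  have V2: "verts (two_Kn n) = {0..<n} \<union> {n..<2*n}" unfolding verts_two by auto
  have cA: "card {0..<n} = n" "card {n..<2*n} = n" by auto
  have T: "dom_poly (two_Kn n) = ([:1, 1:] ^ n - 1) ^ 2"
    using dom_poly_two_parts[of "{0..<n}" "{n..<2*n}" "two_Kn n", OF _ _ _ V2 domT] cA
    by (simp add: power2_eq_square)
  have VB: "verts (barbell n) = {0..<n} \<union> {n..<2*n}" unfolding verts_bar by auto
  have B: "dom_poly (barbell n) = ([:1, 1:] ^ n - 1) ^ 2"
    using dom_poly_two_parts[of "{0..<n}" "{n..<2*n}" "barbell n", OF _ _ _ VB] cA
      dom_bar[OF assms] domT
    by (simp add: power2_eq_square)
  define m where "m = n - 1"
  have nm: "n = m + 1" using assms m_def by simp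
  define P where "P = {0} \<union> {m+2..<2*m+2}"
  define Q where "Q = {1..m+1}"
  have VC: "verts (complement (book m)) = P \<union> Q" unfolding verts_comp verts_book P_def Q_def by auto
  have cP: "card P = n" unfolding P_def nm by (simp add: card_insert_if)
  have cQ: "card Q = n" unfolding Q_def nm by simp
  have disj: "P \<inter> Q = {}" unfolding P_def Q_def by auto
  have domC: "\<And>S. dominating (complement (book m)) S \<longleftrightarrow> S \<subseteq> P \<union> Q \<and> S \<inter> P \<noteq> {} \<and> S \<inter> Q \<noteq> {}"
    unfolding P_def Q_def by (rule dom_book)
  have fP: "finite P" "finite Q" unfolding P_def Q_def by auto
  have "dom_poly (complement (book m)) = ([:1,1:] ^ card P - 1) * ([:1,1:] ^ card Q - 1)"
    by (rule dom_poly_two_parts[OF fP disj VC domC])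
  then have C: "dom_poly (complement (book (n-1))) = ([:1, 1:] ^ n - 1) ^ 2"
    unfolding m_def[symmetric] cP cQ by (simp add: power2_eq_square)
  have s: "simple_graph (barbell n)" "simple_graph (complement (book (n-1)))" "simple_graph (two_Kn n)"
    using simple_bar[OF assms] simple_comp[of "book (n-1)"] simple_two[of n]
    by (auto simp: verts_book)
  have cls: "{barbell n, complement (book (n - 1)), two_Kn n} \<subseteq> D_class (barbell n)"
    using s B C T by (auto simp: D_class_def D_equiv_def)
  have eqc: "D_class (barbell n) = D_class (complement (book (n - 1)))"
    using B C by (simp add: D_class_def D_equiv_def)
  have "\<not> D_unique (barbell n)"
    using cls not_iso[OF assms] unfolding D_unique_def by auto
  then show ?thesis using B C T cls eqc by blast
qed

end
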